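(* Let $(\mathcal X,R)$ be a quantum poset such that $\mathcal X$ has only finitely many atoms. Then $(\mathcal X,R)$ is a quantum cpo.
   Context: A quantum set $\mathcal X$ is a set $\mathrm{At}(\mathcal X)$ of nonzero finite-dimensional Hilbert spaces (atoms). A relation $R$ from $\mathcal X$ to $\mathcal Y$ is a choice of subspaces $R(X,Y)\subseteq L(X,Y)$ for all atoms. Composition: $(S\circ R)(X,Z)=\mathrm{span}\{sr: r\in R(X,Y), s\in S(Y,Z), Y\in\mathrm{At}(\mathcal Y)\}$; identity $I_{\mathcal X}(X,X)=\mathbb C 1_X$ and $0$ off the diagonal; adjoint $R^\dagger(Y,X)=\{r^\dagger: r\in R(X,Y)\}$; $R\le S$ entrywise inclusion; $\bigwedge$ entrywise intersection. A function $F:\mathcal X\to\mathcal Y$ is a relation with $F\circ F^\dagger\le I_{\mathcal Y}$ and $F^\dagger\circ F\ge I_{\mathcal X}$. A quantum poset is $(\mathcal X,R)$ with $I_{\mathcal X}\le R$, $R\circ R\le R$, $R\wedge R^\dagger\le I_{\mathcal X}$. For functions $F,G:\mathcal W\to\mathcal X$, $F\sqsubseteq G$ means $G\le R\circ F$. For an increasing sequence $K_1\sqsubseteq K_2\sqsubseteq\cdots:\mathcal W\to\mathcal X$, write $K_n\nearrow K_\infty$ if $K_\infty:\mathcal W\to\mathcal X$ is a function with $R\circ K_\infty=\bigwedge_{n}R\circ K_n$. $\mathbf H_d$ denotes the quantum set whose single atom is $\mathbb C^d$. A quantum poset $(\mathcal X,R)$ is a quantum cpo if for every $d\ge 1$ and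 every increasing sequence $K_1\sqsubseteq K_2\sqsubseteq\cdots:\mathbf H_d\to\mathcal X$ there is a function $K_\infty:\mathbf H_d\to\mathcal X$ with $K_n\nearrow K_\infty$. *)

theory Defs
  imports "Jordan_Normal_Form.Schur_Decomposition"
begin

text \<open>A quantum set is modelled by an index set of atoms At together with a
dimension function: the atom with index x is the Hilbert space C^(dim x),
required to be nonzero (dim x > 0).  A linear map C^m -> C^n is an n x m
complex matrix.\<close>

definition qset :: "'i set \<Rightarrow> ('i \<Rightarrow> nat) \<Rightarrow> bool" where
  "qset A d \<longleftrightarrow> (\<forall>x\<in>A. 0 < d x)"

definition msubspace :: "nat \<Rightarrow> nat \<Rightarrow> complex mat set \<Rightarrow> bool" where
  "msubspace n m V \<longleftrightarrow> V \<subseteq> carrier_mat n m \<and> 0\<^sub>m n m \<in> V \<and>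
     (\<forall>a\<in>V. \<forall>b\<in>V. a + b \<in> V) \<and> (\<forall>c. \<forall>a\<in>V. c \<cdot>\<^sub>m a \<in> V)"

definition mspan :: "nat \<Rightarrow> nat \<Rightarrow> complex mat set \<Rightarrow> complex mat set" where
  "mspan n m S = \<Inter> {V. msubspace n m V \<and> S \<subseteq> V}"

definition qrel :: "'i set \<Rightarrow> ('i \<Rightarrow> nat) \<Rightarrow> 'j set \<Rightarrow> ('j \<Rightarrow> nat)
    \<Rightarrow> ('i \<Rightarrow> 'j \<Rightarrow> complex mat set) \<Rightarrow> bool" where
  "qrel A dA B dB R \<longleftrightarrow> (\<forall>x\<in>A. \<forall>y\<in>B. msubspace (dB y) (dA x) (R x y))"

text \<open>Composition S o R of R : X -> Y and S : Y -> Z (summing over the atoms B of Y).\<close>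
definition qcomp :: "'j set \<Rightarrow> ('i \<Rightarrow> nat) \<Rightarrow> ('k \<Rightarrow> nat)
    \<Rightarrow> ('j \<Rightarrow> 'k \<Rightarrow> complex mat set) \<Rightarrow> ('i \<Rightarrow> 'j \<Rightarrow> complex mat set)
    \<Rightarrow> ('i \<Rightarrow> 'k \<Rightarrow> complex mat set)" where
  "qcomp B dA dC S R = (\<lambda>x z. mspan (dC z) (dA x)
      {s * r | y r s. y \<in> B \<and> r \<in> R x y \<and> s \<in> S y z})"

definition qid :: "('i \<Rightarrow> nat) \<Rightarrow> ('i \<Rightarrow> 'i \<Rightarrow> complex mat set)" where
  "qid d = (\<lambda>x x'. if x = x' then {c \<cdot>\<^sub>m 1\<^sub>m (d x) | c. True} else {0\<^sub>m (d x') (d x)})"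

definition qadj :: "('i \<Rightarrow> 'j \<Rightarrow> complex mat set) \<Rightarrow> ('j \<Rightarrow> 'i \<Rightarrow> complex mat set)" where
  "qadj R = (\<lambda>y x. mat_adjoint ` R x y)"

definition qle :: "'i set \<Rightarrow> 'j set \<Rightarrow> ('i \<Rightarrow> 'j \<Rightarrow> complex mat set)
    \<Rightarrow> ('i \<Rightarrow> 'j \<Rightarrow> complex mat set) \<Rightarrow> bool" where
  "qle A B R S \<longleftrightarrow> (\<forall>x\<in>A. \<forall>y\<in>B. R x y \<subseteq> S x y)"

definition qfun :: "'i set \<Rightarrow> ('i \<Rightarrow> nat) \<Rightarrow> 'j set \<Rightarrow> ('j \<Rightarrow> nat)
    \<Rightarrow> ('i \<Rightarrow> 'j \<Rightarrow> complex mat set) \<Rightarrow> bool" where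
  "qfun A dA B dB F \<longleftrightarrow> qrel A dA B dB F \<and>
     qle B B (qcomp A dB dB F (qadj F)) (qid dB) \<and>
     qle A A (qid dA) (qcomp B dA dA (qadj F) F)"

definition qposet :: "'i set \<Rightarrow> ('i \<Rightarrow> nat) \<Rightarrow> ('i \<Rightarrow> 'i \<Rightarrow> complex mat set) \<Rightarrow> bool" where
  "qposet A d R \<longleftrightarrow> qset A d \<and> qrel A d A d R \<and> qle A A (qid d) R \<and>
     qle A A (qcomp A d d R R) R \<and> qle A A (\<lambda>x y. R x y \<inter> qadj R x y) (qid d)"

definition qsqle :: "'w set \<Rightarrow> ('w \<Rightarrow> nat) \<Rightarrow> 'i set \<Rightarrow> ('i \<Rightarrow> nat)
    \<Rightarrow> ('i \<Rightarrow> 'i \<Rightarrow> complex mat set)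
    \<Rightarrow> ('w \<Rightarrow> 'i \<Rightarrow> complex mat set) \<Rightarrow> ('w \<Rightarrow> 'i \<Rightarrow> complex mat set) \<Rightarrow> bool" where
  "qsqle W dW A d R F G \<longleftrightarrow> qle W A G (qcomp A dW d R F)"

definition qconv :: "'w set \<Rightarrow> ('w \<Rightarrow> nat) \<Rightarrow> 'i set \<Rightarrow> ('i \<Rightarrow> nat)
    \<Rightarrow> ('i \<Rightarrow> 'i \<Rightarrow> complex mat set)
    \<Rightarrow> (nat \<Rightarrow> 'w \<Rightarrow> 'i \<Rightarrow> complex mat set) \<Rightarrow> ('w \<Rightarrow> 'i \<Rightarrow> complex mat set) \<Rightarrow> bool" where
  "qconv W dW A d R K Kinf \<longleftrightarrow> qfun W dW A d Kinf \<and>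
     (\<forall>w\<in>W. \<forall>x\<in>A. qcomp A dW d R Kinf w x = (\<Inter>n. qcomp A dW d R (K n) w x))"

text \<open>H_d: the quantum set with the single atom C^d (index type unit).\<close>
definition qcpo :: "'i set \<Rightarrow> ('i \<Rightarrow> nat) \<Rightarrow> ('i \<Rightarrow> 'i \<Rightarrow> complex mat set) \<Rightarrow> bool" where
  "qcpo A d R \<longleftrightarrow> qposet A d R \<and>
     (\<forall>(dd::nat) (K :: nat \<Rightarrow> unit \<Rightarrow> 'i \<Rightarrow> complex mat set). 1 \<le> dd \<longrightarrow>
        (\<forall>n. qfun {()} (\<lambda>_. dd) A d (K n)) \<longrightarrow>
        (\<forall>n. qsqle {()} (\<lambda>_. dd) A d R (K n) (K (Suc n))) \<longrightarrow>
        (\<exists>Kinf. qconv {()} (\<lambda>_. dd) A d R K Kinf))"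

end

theory Submission
  imports Defs "HOL-Library.Function_Algebras"
begin

lemma (in vector_space) dim_strict:
  assumes "subspace S" "subspace T" "S \<subseteq> T" "S \<noteq> T" "T \<subseteq> span W" "finite W"
  shows "dim S < dim T"
proof -
  obtain B where B: "B \<subseteq> S" "independent B" "S \<subseteq> span B" "card B = dim S"
    by (rule basis_exists[of S])
  obtain t where t: "t \<in> T" "t \<notin> S" using assms(3,4) by auto
  have "span B \<subseteq> S" using span_minimal[OF B(1) assms(1)] .
  hence tB: "t \<notin> span B" using t by auto
  have ind: "independent (insert t B)" using independent_insertI[OF tB B(2)] .
  have iT: "insert t B \<subseteq> T" using B(1) assms(3) t by auto
  obtain B' where B': "insert t B \<subseteq> B'" "B' \<subseteq> T" "independent B'" "T \<subseteq> span B'"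
    by (rule maximal_independent_subset_extend[OF iT ind])
  have fB': "finite B'" "card B' \<le> card W"
    using independent_span_bound[OF assms(6) B'(3)] B'(2) assms(5) by (meson order_trans)+
  have dT: "card B' = dim T" using basis_card_eq_dim[OF B'(2) B'(4) B'(3)] .
  have fB: "finite B" using fB' B'(1) finite_subset by auto
  have "t \<notin> B" using B(1) t by auto
  hence "card B < card (insert t B)" using fB by simp
  also have "\<dots> \<le> card B'" using card_mono[OF fB'(1) B'(1)] .
  finally show ?thesis using B(4) dT by simp
qed

definition fsc :: "complex \<Rightarrow> (nat \<times> nat \<Rightarrow> complex) \<Rightarrow> (nat \<times> nat \<Rightarrow> complex)" where
  "fsc c f = (\<lambda>p. c * f p)"

global_interpretation fv: vector_space fsc
  by unfold_locales (auto simp: fsc_def fun_eq_iff algebra_simps)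

definition emb :: "complex mat \<Rightarrow> nat \<times> nat \<Rightarrow> complex" where
  "emb M = (\<lambda>(i,j). if i < dim_row M \<and> j < dim_col M then M $$ (i,j) else 0)"

lemma sum_fun_apply': "(\<Sum>p\<in>S. f p) x = (\<Sum>p\<in>S. f p x)"
  by (induction S rule: infinite_finite_induct) auto

lemma emb_sum:
  assumes "M \<in> carrier_mat n m"
  shows "emb M = (\<Sum>p\<in>{..<n}\<times>{..<m}. fsc (M $$ p) (\<lambda>q. if q = p then 1 else 0))"
proof (rule ext)
  fix q :: "nat \<times> nat"
  obtain i j where q: "q = (i,j)" by force
  have "(\<Sum>p\<in>{..<n}\<times>{..<m}. fsc (M $$ p) (\<lambda>q. if q = p then 1 else 0)) q
      = (\<Sum>p\<in>{..<n}\<times>{..<m}. if p = q then M $$ p else 0)"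
    unfolding sum_fun_apply' fsc_def by (intro sum.cong) auto
  also have "\<dots> = (if q \<in> {..<n}\<times>{..<m} then M $$ q else 0)"
    by (simp add: sum.delta')
  finally show "emb M q = (\<Sum>p\<in>{..<n}\<times>{..<m}. fsc (M $$ p) (\<lambda>q. if q = p then 1 else 0)) q"
    using assms q by (auto simp: emb_def)
qed

lemma emb_span:
  assumes "M \<in> carrier_mat n m"
  shows "emb M \<in> fv.span ((\<lambda>p. (\<lambda>q. if q = p then 1 else 0)) ` ({..<n}\<times>{..<m}))"
  unfolding emb_sum[OF assms]
  by (intro fv.span_sum fv.span_scale fv.span_base) auto

lemma emb_add: "A \<in> carrier_mat n m \<Longrightarrow> B \<in> carrier_mat n m \<Longrightarrow> emb (A + B) = emb A + emb B"
  by (auto simp: emb_def fun_eq_iff)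

lemma emb_smult: "emb (c \<cdot>\<^sub>m A) = fsc c (emb A)"
  by (auto simp: emb_def fun_eq_iff fsc_def)

lemma emb_zero: "emb (0\<^sub>m n m) = 0"
  by (auto simp: emb_def fun_eq_iff)

lemma emb_inj: "inj_on emb (carrier_mat n m)"
proof (rule inj_onI)
  fix A B assume A: "A \<in> carrier_mat n m" and B: "B \<in> carrier_mat n m" and e: "emb A = emb B"
  show "A = B"
  proof (rule eq_matI)
    fix i j assume "i < dim_row B" "j < dim_col B"
    then show "A $$ (i, j) = B $$ (i, j)" using A B fun_cong[OF e, of "(i,j)"] by (auto simp: emb_def)
  qed (use A B in auto)
qed

lemma emb_subspace:
  assumes "msubspace n m V"
  shows "fv.subspace (emb ` V)"
  unfolding fv.subspace_def
proof (intro conjI ballI allI)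
  have V: "V \<subseteq> carrier_mat n m" using assms by (simp add: msubspace_def)
  show "0 \<in> emb ` V" using assms emb_zero[of n m] unfolding msubspace_def by (metis image_eqI)
  fix x y assume "x \<in> emb ` V" "y \<in> emb ` V"
  then obtain a b where "a \<in> V" "b \<in> V" "x = emb a" "y = emb b" by blast
  then show "x + y \<in> emb ` V" using emb_add[of a n m b] V assms unfolding msubspace_def
    by (metis image_eqI subsetD)
next
  fix c x assume "x \<in> emb ` V"
  then obtain a where "a \<in> V" "x = emb a" by blast
  then show "fsc c x \<in> emb ` V" using emb_smult[of c a] assms unfolding msubspace_def
    by (metis image_eqI)
qed

lemma msub_chain_stable:
  assumes sub: "\<And>k. msubspace n m (V k)" and dec: "\<And>k. V (Suc k) \<subseteq> V k"
  shows "\<exists>N. \<forall>k\<ge>N. V k = V N"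
proof -
  define W where "W = (\<lambda>p. (\<lambda>q::nat\<times>nat. if q = p then (1::complex) else 0)) ` ({..<n}\<times>{..<m})"
  have fW: "finite W" unfolding W_def by simp
  have car: "\<And>k. V k \<subseteq> carrier_mat n m" using sub by (simp add: msubspace_def)
  have spW: "\<And>k. emb ` V k \<subseteq> fv.span W" using car emb_span unfolding W_def by blast
  define \<mu> where "\<mu> k = fv.dim (emb ` V k)" for k
  have stp: "\<mu> (Suc k) \<le> \<mu> k \<and> (V (Suc k) \<noteq> V k \<longrightarrow> \<mu> (Suc k) < \<mu> k)" for k
  proof (cases "V (Suc k) = V k")
    case True then show ?thesis by (simp add: \<mu>_def)
  next
    case False
    have ne: "emb ` V (Suc k) \<noteq> emb ` V k"
      using False by (simp add: inj_on_image_eq_iff[OF emb_inj[of n m] car car])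
    have "\<mu> (Suc k) < \<mu> k"
      using fv.dim_strict[OF emb_subspace[OF sub] emb_subspace[OF sub] image_mono[OF dec] ne spW fW]
      unfolding \<mu>_def .
    then show ?thesis using False by simp
  qed
  define v where "v = (LEAST v. \<exists>k. \<mu> k = v)"
  have "\<exists>k. \<mu> k = v" unfolding v_def using LeastI[of "\<lambda>v. \<exists>k. \<mu> k = v" "\<mu> 0"] by auto
  then obtain N where N: "\<mu> N = v" by auto
  have vle: "v \<le> \<mu> k" for k unfolding v_def using Least_le[of "\<lambda>v. \<exists>k. \<mu> k = v" "\<mu> k"] by auto
  have mono: "\<mu> k \<le> \<mu> N" if "N \<le> k" for k
    using that
  proof (induction k rule: dec_induct)
    case (step k) then show ?case using stp[of k] by linarith
  qed simp
  have "V k = V N" if "N \<le> k" for k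
    using that
  proof (induction k rule: dec_induct)
    case (step k)
    have a: "\<mu> k \<le> \<mu> N" using mono step.hyps(1) by simp
    have b: "\<mu> (Suc k) \<le> \<mu> N" using mono step.hyps(1) by simp
    have "\<mu> (Suc k) = \<mu> k" using a b vle[of k] vle[of "Suc k"] N by linarith
    then show ?case using stp[of k] step.IH by auto
  qed simp
  then show ?thesis by blast
qed


lemma mspan_sub: "msubspace n m V \<Longrightarrow> S \<subseteq> V \<Longrightarrow> mspan n m S \<subseteq> V"
  unfolding mspan_def by auto

lemma mspan_base: "S \<subseteq> mspan n m S"
  unfolding mspan_def by auto

lemma msubspace_carrier: "msubspace n m (carrier_mat n m)"
  unfolding msubspace_def by auto

lemma mspan_msubspace:
  assumes "S \<subseteq> carrier_mat n m"
  shows "msubspace n m (mspan n m S)"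
proof -
  have c: "mspan n m S \<subseteq> carrier_mat n m" using mspan_sub[OF msubspace_carrier assms] .
  show ?thesis unfolding msubspace_def
  proof (intro conjI ballI allI c)
    show "0\<^sub>m n m \<in> mspan n m S" unfolding mspan_def msubspace_def by auto
    fix a b assume "a \<in> mspan n m S" "b \<in> mspan n m S"
    then show "a + b \<in> mspan n m S" unfolding mspan_def msubspace_def by auto
  next
    fix c a assume "a \<in> mspan n m S"
    then show "c \<cdot>\<^sub>m a \<in> mspan n m S" unfolding mspan_def msubspace_def by auto
  qed
qed

lemma msubspace_zero: "msubspace n m V \<Longrightarrow> 0\<^sub>m n m \<in> V"
  unfolding msubspace_def by auto
lemma msubspace_add: "msubspace n m V \<Longrightarrow> a \<in> V \<Longrightarrow> b \<in> V \<Longrightarrow> a + b \<in> V"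
  unfolding msubspace_def by auto
lemma msubspace_smult: "msubspace n m V \<Longrightarrow> a \<in> V \<Longrightarrow> c \<cdot>\<^sub>m a \<in> V"
  unfolding msubspace_def by auto
lemma msubspace_car: "msubspace n m V \<Longrightarrow> a \<in> V \<Longrightarrow> a \<in> carrier_mat n m"
  unfolding msubspace_def by auto

lemma comp_gens_carrier:
  assumes R: "qrel A d A d R" and K: "qrel {()} (\<lambda>_. dd) A d K" and x: "x \<in> A"
  shows "{s * r | y r s. y \<in> A \<and> r \<in> K () y \<and> s \<in> R y x} \<subseteq> carrier_mat (d x) dd"
proof
  fix t assume "t \<in> {s * r | y r s. y \<in> A \<and> r \<in> K () y \<and> s \<in> R y x}"
  then obtain y r s where t: "t = s * r" "y \<in> A" "r \<in> K () y" "s \<in> R y x" by blast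
  have "r \<in> carrier_mat (d y) dd" using K t unfolding qrel_def by (auto intro: msubspace_car)
  moreover have "s \<in> carrier_mat (d x) (d y)" using R t x unfolding qrel_def by (auto intro: msubspace_car)
  ultimately show "t \<in> carrier_mat (d x) dd" using t by auto
qed

lemma comp_mono_step:
  assumes P: "qposet A d R" and K: "qrel {()} (\<lambda>_. dd) A d K" and K': "qrel {()} (\<lambda>_. dd) A d K'"
    and le: "\<forall>y\<in>A. K' () y \<subseteq> qcomp A (\<lambda>_. dd) d R K () y"
    and x: "x \<in> A"
  shows "qcomp A (\<lambda>_. dd) d R K' () x \<subseteq> qcomp A (\<lambda>_. dd) d R K () x"
proof -
  have R: "qrel A d A d R" using P unfolding qposet_def by auto
  have trans: "\<And>a b. a \<in> A \<Longrightarrow> b \<in> A \<Longrightarrow> qcomp A d d R R a b \<subseteq> R a b"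
    using P unfolding qposet_def qle_def by auto
  define C where "C y = qcomp A (\<lambda>_. dd) d R K () y" for y
  have Csub: "msubspace (d y) dd (C y)" if "y \<in> A" for y
    unfolding C_def qcomp_def using mspan_msubspace[OF comp_gens_carrier[OF R K that]] .
  have gen: "s * r \<in> C x" if y: "y \<in> A" and r: "r \<in> K' () y" and s: "s \<in> R y x" for y r s
  proof -
    have sc: "s \<in> carrier_mat (d x) (d y)" using R y x s unfolding qrel_def by (auto intro: msubspace_car)
    define Q where "Q = {r \<in> carrier_mat (d y) dd. s * r \<in> C x}"
    have "msubspace (d y) dd Q" unfolding msubspace_def
    proof (intro conjI ballI allI)
      show "Q \<subseteq> carrier_mat (d y) dd" unfolding Q_def by auto
      show "0\<^sub>m (d y) dd \<in> Q" unfolding Q_def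
        using sc msubspace_zero[OF Csub[OF x]] by simp
      fix a b assume "a \<in> Q" "b \<in> Q"
      then show "a + b \<in> Q" unfolding Q_def
        using sc msubspace_add[OF Csub[OF x]] by (auto simp: mult_add_distrib_mat)
    next
      fix c a assume "a \<in> Q"
      then show "c \<cdot>\<^sub>m a \<in> Q" unfolding Q_def
        using sc msubspace_smult[OF Csub[OF x]] by (auto simp: mult_smult_distrib)
    qed
    moreover have "{s' * r' | y' r' s'. y' \<in> A \<and> r' \<in> K () y' \<and> s' \<in> R y' y} \<subseteq> Q"
    proof
      fix t assume "t \<in> {s' * r' | y' r' s'. y' \<in> A \<and> r' \<in> K () y' \<and> s' \<in> R y' y}"
      then obtain y' r' s' where t: "t = s' * r'" "y' \<in> A" "r' \<in> K () y'" "s' \<in> R y' y" by blast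
      have rc: "r' \<in> carrier_mat (d y') dd" using K t unfolding qrel_def by (auto intro: msubspace_car)
      have s'c: "s' \<in> carrier_mat (d y) (d y')" using R t y unfolding qrel_def by (auto intro: msubspace_car)
      have "s * s' \<in> qcomp A d d R R y' x"
        unfolding qcomp_def using t(2,4) y s by (intro subsetD[OF mspan_base]) blast
      hence ss: "s * s' \<in> R y' x" using trans[OF t(2) x] by auto
      have "s * t = (s * s') * r'" using t(1) sc s'c rc by (simp add: assoc_mult_mat)
      moreover have "(s * s') * r' \<in> C x"
        unfolding C_def qcomp_def using t(2,3) ss by (intro subsetD[OF mspan_base]) blast
      ultimately show "t \<in> Q" unfolding Q_def using t(1) s'c rc by auto
    qed
    ultimately have "C y \<subseteq> Q" unfolding C_def qcomp_def by (rule mspan_sub)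
    moreover have "r \<in> C y" using le r y unfolding C_def by auto
    ultimately show ?thesis unfolding Q_def by auto
  qed
  have "qcomp A (\<lambda>_. dd) d R K' () x \<subseteq> C x"
    unfolding qcomp_def[of A "\<lambda>_. dd" d R K'] using Csub[OF x] gen
    by (intro mspan_sub) auto
  then show ?thesis unfolding C_def .
qed


theorem mainTheorem7:
  fixes A :: "'i set" and d :: "'i \<Rightarrow> nat" and R :: "'i \<Rightarrow> 'i \<Rightarrow> complex mat set"
  assumes "qposet A d R" and "finite A"
  shows "qcpo A d R"
  unfolding qcpo_def
proof (intro conjI allI impI assms(1))
  fix dd :: nat and K :: "nat \<Rightarrow> unit \<Rightarrow> 'i \<Rightarrow> complex mat set"
  assume "1 \<le> dd" and hf: "\<forall>n. qfun {()} (\<lambda>_. dd) A d (K n)"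
    and hs: "\<forall>n. qsqle {()} (\<lambda>_. dd) A d R (K n) (K (Suc n))"
  have R: "qrel A d A d R" using assms(1) unfolding qposet_def by auto
  have Kr: "qrel {()} (\<lambda>_. dd) A d (K n)" for n using hf unfolding qfun_def by auto
  define V where "V k x = qcomp A (\<lambda>_. dd) d R (K k) () x" for k x
  have dec: "V (Suc k) x \<subseteq> V k x" if "x \<in> A" for k x
    unfolding V_def
  proof (rule comp_mono_step[OF assms(1) Kr Kr _ that])
    show "\<forall>y\<in>A. K (Suc k) () y \<subseteq> qcomp A (\<lambda>_. dd) d R (K k) () y"
      using hs unfolding qsqle_def qle_def by auto
  qed
  have sub: "msubspace (d x) dd (V k x)" if "x \<in> A" for k x
    unfolding V_def qcomp_def using mspan_msubspace[OF comp_gens_carrier[OF R Kr that]] .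
  have "\<exists>N. \<forall>k\<ge>N. V k x = V N x" if "x \<in> A" for x
    using msub_chain_stable[of "d x" dd "\<lambda>k. V k x"] sub[OF that] dec[OF that] by auto
  then obtain Nf where Nf: "\<And>x k. x \<in> A \<Longrightarrow> Nf x \<le> k \<Longrightarrow> V k x = V (Nf x) x" by metis
  define N where "N = Max (insert 0 (Nf ` A))"
  have NfN: "Nf x \<le> N" if "x \<in> A" for x unfolding N_def using assms(2) that by auto
  have stab: "V k x = V N x" if "x \<in> A" "N \<le> k" for k x
    using Nf[OF that(1)] NfN[OF that(1)] that(2) by (metis order_trans order_refl)
  have anti: "V N x \<subseteq> V k x" if "x \<in> A" "k \<le> N" for k x
    using that(2)
  proof (induction N rule: dec_induct)
    case (step m) then show ?case using dec[OF that(1), of m] by auto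
  qed simp
  have "qconv {()} (\<lambda>_. dd) A d R K (K N)"
    unfolding qconv_def
  proof (intro conjI ballI)
    show "qfun {()} (\<lambda>_. dd) A d (K N)" using hf by auto
    fix w x assume w: "w \<in> {()}" and x: "x \<in> A"
    have "V N x = (\<Inter>n. V n x)"
    proof
      show "V N x \<subseteq> (\<Inter>n. V n x)"
      proof (rule INT_greatest)
        fix n show "V N x \<subseteq> V n x"
        proof (cases "n \<le> N")
          case True then show ?thesis using anti[OF x] by auto
        next
          case False then show ?thesis using stab[OF x, of n] by auto
        qed
      qed
      show "(\<Inter>n. V n x) \<subseteq> V N x" by auto
    qed
    then show "qcomp A (\<lambda>_. dd) d R (K N) w x = (\<Inter>n. qcomp A (\<lambda>_. dd) d R (K n) w x)"
      using w unfolding V_def by auto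
  qed
  then show "\<exists>Kinf. qconv {()} (\<lambda>_. dd) A d R K Kinf" by blast
qed

end
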